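(* For every $\beta > 0$ there exists a constant $C_0 > 0$ such that the following holds. Let $\mathcal{G}$ be a graph on $n$ vertices with maximum degree at most $d$. If $e(\mathcal{G}) \geqslant 4\beta d n$, then for every $C \geqslant C_0$, $$I(\mathcal{G},m) \leqslant \Big( n^{-Cd} + e^{-\beta m}\Big)\binom{n}{m}$$ for every $m \geqslant C\sqrt{n\log n}$.
   Context: $e(\mathcal{G})$ is the number of edges of $\mathcal{G}$ and $I(\mathcal{G},m)$ is the number of independent sets of size $m$ in $\mathcal{G}$. $\log$ is the natural logarithm. *)

theory Defs
  imports Complex_Main
begin

definition simple_graph :: "'a set \<Rightarrow> 'a set set \<Rightarrow> bool" where
  "simple_graph V E \<longleftrightarrow> finite V \<and> (\<forall>e\<in>E. e \<subseteq> V \<and> card e = 2)"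

definition num_edges :: "'a set set \<Rightarrow> nat" where
  "num_edges E = card E"

definition degree :: "'a set set \<Rightarrow> 'a \<Rightarrow> nat" where
  "degree E v = card {e\<in>E. v \<in> e}"

definition max_degree_le :: "'a set \<Rightarrow> 'a set set \<Rightarrow> nat \<Rightarrow> bool" where
  "max_degree_le V E d \<longleftrightarrow> (\<forall>v\<in>V. degree E v \<le> d)"

definition independent_set :: "'a set \<Rightarrow> 'a set set \<Rightarrow> 'a set \<Rightarrow> bool" where
  "independent_set V E S \<longleftrightarrow> S \<subseteq> V \<and> (\<forall>e\<in>E. \<not> e \<subseteq> S)"

definition num_indep :: "'a set \<Rightarrow> 'a set set \<Rightarrow> nat \<Rightarrow> nat" where
  "num_indep V E m = card {S. independent_set V E S \<and> card S = m}"

end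

theory Submission
  imports Defs
begin


definition nb :: "nat set set \<Rightarrow> nat \<Rightarrow> nat set" where
  "nb E v = {w. {v,w} \<in> E}"

definition NS :: "nat set set \<Rightarrow> nat set \<Rightarrow> nat set" where
  "NS E A = (\<Union>v\<in>A. nb E v)"

lemma sg_finE: "simple_graph V E \<Longrightarrow> finite E"
  unfolding simple_graph_def by (meson Pow_iff finite_Pow_iff finite_subset subsetI)

lemma nb_sub: "simple_graph V E \<Longrightarrow> nb E v \<subseteq> V"
  unfolding simple_graph_def nb_def by auto

lemma NS_sub: "simple_graph V E \<Longrightarrow> NS E A \<subseteq> V"
  unfolding NS_def using nb_sub by blast

lemma nb_fin: "simple_graph V E \<Longrightarrow> finite (nb E v)"
  using nb_sub simple_graph_def finite_subset by metis

lemma NS_fin: "simple_graph V E \<Longrightarrow> finite (NS E A)"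
  using NS_sub simple_graph_def finite_subset by metis

lemma card_nb: assumes "simple_graph V E" shows "card (nb E v) = degree E v"
proof -
  have "bij_betw (\<lambda>w. {v,w}) (nb E v) {e\<in>E. v \<in> e}"
  proof (rule bij_betwI')
    show "\<And>x y. x \<in> nb E v \<Longrightarrow> y \<in> nb E v \<Longrightarrow> ({v, x} = {v, y}) = (x = y)"
      by (metis doubleton_eq_iff)
    show "\<And>x. x \<in> nb E v \<Longrightarrow> {v, x} \<in> {e \<in> E. v \<in> e}" by (auto simp: nb_def)
    show "\<exists>x\<in>nb E v. y = {v, x}" if "y \<in> {e \<in> E. v \<in> e}" for y
    proof -
      have "card y = 2" "y \<in> E" "v \<in> y" using that assms by (auto simp: simple_graph_def)
      then obtain a b where "y = {a,b}" "a \<noteq> b" by (auto simp: card_2_iff)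
      then show ?thesis using \<open>v\<in>y\<close> \<open>y\<in>E\<close> by (auto simp: nb_def insert_commute)
    qed
  qed
  then show ?thesis unfolding degree_def by (simp add: bij_betw_same_card)
qed

lemma handshake: assumes "simple_graph V E"
  shows "(\<Sum>v\<in>V. degree E v) = 2 * card E"
proof -
  have fV: "finite V" and fE: "finite E" using assms sg_finE simple_graph_def by auto
  have "(\<Sum>v\<in>V. degree E v) = (\<Sum>v\<in>V. \<Sum>e\<in>E. if v \<in> e then 1 else 0)"
    unfolding degree_def using fE by (auto simp: sum.If_cases intro!: sum.cong arg_cong[where f=card])
  also have "\<dots> = (\<Sum>e\<in>E. \<Sum>v\<in>V. if v \<in> e then 1 else 0)" by (rule sum.swap)
  also have "\<dots> = (\<Sum>e\<in>E. card e)"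
  proof (rule sum.cong[OF refl])
    fix e assume "e \<in> E"
    then have "e \<subseteq> V" using assms by (auto simp: simple_graph_def)
    then have "{v\<in>V. v \<in> e} = e" by auto
    then show "(\<Sum>v\<in>V. if v \<in> e then 1 else 0) = card e" using fV
      by (simp add: sum.If_cases Int_def)
  qed
  also have "\<dots> = (\<Sum>e\<in>E. 2)" using assms by (auto simp: simple_graph_def)
  finally show ?thesis by simp
qed

lemma card_filter_sum: "finite Y \<Longrightarrow> card {y\<in>Y. P y} = (\<Sum>y\<in>Y. if P y then 1 else 0)"
  by (simp add: sum.If_cases Int_def)

lemma good_count:
  assumes sg: "simple_graph V E" and md: "max_degree_le V E d" and B: "B \<subseteq> V" and that: "g \<ge> 0"
  shows "real d * real (card {x\<in>V. real (card (nb E x - B)) \<ge> g}) + g * real (card V)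
         \<ge> 2 * real (card E) - real d * real (card B)"
proof -
  have fV: "finite V" using sg simple_graph_def by auto
  let ?G = "{x\<in>V. real (card (nb E x - B)) \<ge> g}"
  have c1: "card (nb E x - B) = (\<Sum>y\<in>V-B. if {x,y}\<in>E then 1 else 0)" if "x\<in>V" for x
  proof -
    have "nb E x - B = {y\<in>V-B. {x,y}\<in>E}" using nb_sub[OF sg, of x] by (auto simp: nb_def)
    then show ?thesis using fV card_filter_sum[of "V-B"] by simp
  qed
  have c2: "card (nb E y) = (\<Sum>x\<in>V. if {x,y}\<in>E then 1 else 0)" for y
  proof -
    have "nb E y = {x\<in>V. {x,y}\<in>E}" using nb_sub[OF sg, of y] by (auto simp: nb_def insert_commute)
    then show ?thesis using fV card_filter_sum[of "V"] by simp
  qed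
  have "(\<Sum>x\<in>V. card (nb E x - B)) = (\<Sum>x\<in>V. \<Sum>y\<in>V-B. if {x,y}\<in>E then 1 else 0)"
    using c1 by simp
  also have "\<dots> = (\<Sum>y\<in>V-B. \<Sum>x\<in>V. if {x,y}\<in>E then 1 else 0)" by (rule sum.swap)
  also have "\<dots> = (\<Sum>y\<in>V-B. degree E y)" using c2 card_nb[OF sg] by simp
  finally have e1: "(\<Sum>x\<in>V. card (nb E x - B)) = (\<Sum>y\<in>V-B. degree E y)" .
  have "(\<Sum>y\<in>V-B. degree E y) + (\<Sum>y\<in>B. degree E y) = 2 * card E"
    using handshake[OF sg] sum.subset_diff[OF B fV, of "degree E"] by simp
  moreover have "(\<Sum>y\<in>B. degree E y) \<le> d * card B"
    using sum_bounded_above[of B "degree E" d] md B unfolding max_degree_le_def by (auto simp: mult.commute)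
  ultimately have e2: "real (\<Sum>x\<in>V. card (nb E x - B)) \<ge> 2 * real (card E) - real d * real (card B)"
  proof -
    assume h1: "(\<Sum>y\<in>V-B. degree E y) + (\<Sum>y\<in>B. degree E y) = 2 * card E"
      and h2: "(\<Sum>y\<in>B. degree E y) \<le> d * card B"
    have "real (\<Sum>y\<in>V-B. degree E y) + real (\<Sum>y\<in>B. degree E y) = 2 * real (card E)"
      using arg_cong[OF h1, of real] by simp
    moreover have "real (\<Sum>y\<in>B. degree E y) \<le> real d * real (card B)"
      using h2 by (metis of_nat_le_iff of_nat_mult)
    ultimately show ?thesis using e1 by linarith
  qed
  have "real (\<Sum>x\<in>V. card (nb E x - B)) = (\<Sum>x\<in>V. real (card (nb E x - B)))" by simp
  also have "\<dots> \<le> (\<Sum>x\<in>V. if x \<in> ?G then real d else g)"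
  proof (rule sum_mono)
    fix x assume "x\<in>V"
    have "card (nb E x - B) \<le> card (nb E x)" using nb_fin[OF sg] by (simp add: card_mono)
    also have "\<dots> \<le> d" using md \<open>x\<in>V\<close> card_nb[OF sg] by (simp add: max_degree_le_def)
    finally show "real (card (nb E x - B)) \<le> (if x \<in> ?G then real d else g)"
      using \<open>x\<in>V\<close> by auto
  qed
  also have "\<dots> = real d * real (card ?G) + g * real (card (V - ?G))"
    proof -
    have "(\<Sum>x\<in>V. if x \<in> ?G then real d else g) = (\<Sum>x\<in>V \<inter> {x. x\<in>?G}. real d) + (\<Sum>x\<in>V \<inter> - {x. x\<in>?G}. g)"
      using fV by (rule sum.If_cases)
    moreover have "V \<inter> - {x. x\<in>?G} = V - ?G" "V \<inter> {x. x\<in>?G} = ?G" by auto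
    moreover have "V \<inter> ?G = ?G" by auto
    ultimately show ?thesis by (simp add: mult.commute)
  qed
  also have "\<dots> \<le> real d * real (card ?G) + g * real (card V)"
    using that fV by (simp add: card_mono mult_left_mono)
  finally show ?thesis using e2 by linarith
qed



lemma NS_insert: "NS E (insert v A) = nb E v \<union> NS E A"
  unfolding NS_def by auto

lemma NS_mono: "A \<subseteq> A' \<Longrightarrow> NS E A \<subseteq> NS E A'"
  unfolding NS_def by auto

lemma card_NS_insert: assumes "simple_graph V E"
  shows "card (NS E (insert v A)) = card (NS E A) + card (nb E v - NS E A)"
proof -
  have e: "NS E (insert v A) = NS E A \<union> (nb E v - NS E A)" using NS_insert by auto
  have "card (NS E A \<union> (nb E v - NS E A)) = card (NS E A) + card (nb E v - NS E A)"
    by (rule card_Un_disjoint) (use NS_fin[OF assms] nb_fin[OF assms] in auto)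
  then show ?thesis unfolding e .
qed

lemma sum_card_const: "finite V \<Longrightarrow> A \<subseteq> V \<Longrightarrow> (\<Sum>v\<in>V. if v \<in> A then (c::real) else 0) = real (card A) * c"
proof -
  assume f: "finite V" and s: "A \<subseteq> V"
  have "(\<Sum>v\<in>V. if v \<in> A then c else 0) = (\<Sum>v\<in>V \<inter> {x. x \<in> A}. c) + (\<Sum>v\<in>V \<inter> - {x. x\<in>A}. 0)"
    using f by (rule sum.If_cases)
  moreover have "V \<inter> {x. x \<in> A} = A" using s by auto
  ultimately show ?thesis by simp
qed

definition Bad :: "nat set \<Rightarrow> nat set set \<Rightarrow> real \<Rightarrow> nat \<Rightarrow> nat set set" where
  "Bad V E t k = {A. A \<subseteq> V \<and> card A = k \<and> real (card (NS E A)) < t}"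

definition Phi :: "nat set set \<Rightarrow> real \<Rightarrow> nat set \<Rightarrow> real" where
  "Phi E g A = exp (- 3 * real (card (NS E A)) / g)"

definition goodset :: "nat set \<Rightarrow> nat set set \<Rightarrow> real \<Rightarrow> nat set \<Rightarrow> nat set" where
  "goodset V E g A = {x\<in>V. real (card (nb E x - NS E A)) \<ge> g}"

lemma Bad_fin: "finite V \<Longrightarrow> finite (Bad V E t k)"
  unfolding Bad_def by (rule finite_subset[of _ "Pow V"]) auto

lemma Phi_insert:
  assumes sg: "simple_graph V E" and g: "g > 0"
  shows "Phi E g (insert v A) \<le> Phi E g A * (if v \<in> goodset V E g A then exp (-3) else 1)"
proof -
  have "Phi E g (insert v A) = Phi E g A * exp (- 3 * real (card (nb E v - NS E A)) / g)"
    unfolding Phi_def card_NS_insert[OF sg] by (simp add: exp_add[symmetric] add_divide_distrib diff_divide_distrib)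
  moreover have "exp (- 3 * real (card (nb E v - NS E A)) / g) \<le> (if v \<in> goodset V E g A then exp (-3) else 1)"
  proof (cases "v \<in> goodset V E g A")
    case True
    then have "real (card (nb E v - NS E A)) \<ge> g" unfolding goodset_def by auto
    then have "- 3 * real (card (nb E v - NS E A)) / g \<le> -3" using g by (simp add: field_simps)
    then show ?thesis using True by simp
  next
    case False
    have "- 3 * real (card (nb E v - NS E A)) / g \<le> 0" using g by (simp add: field_simps)
    then show ?thesis using False by simp
  qed
  moreover have "Phi E g A \<ge> 0" unfolding Phi_def by simp
  ultimately show ?thesis by (metis mult_left_mono)
qed

lemma good_disj: assumes "g > 0" shows "goodset V E g A \<inter> A = {}"
proof -
  have "nb E x - NS E A = {}" if "x \<in> A" for x using that unfolding NS_def by auto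
  then show ?thesis using assms unfolding goodset_def by fastforce
qed



lemma step:
  assumes sg: "simple_graph V E" and g: "g > 0" and q: "q \<ge> 0"
    and goodq: "\<And>A. A \<in> Bad V E t k \<Longrightarrow> real (card (goodset V E g A)) \<ge> q * real (card V)"
  shows "real (Suc k) * (\<Sum>A\<in>Bad V E t (Suc k). Phi E g A)
         \<le> real (card V - k) * (1 - (1 - exp (-3)) * q) * (\<Sum>A\<in>Bad V E t k. Phi E g A)"
proof -
  have fV: "finite V" using sg simple_graph_def by auto
  let ?B1 = "Bad V E t (Suc k)" and ?B0 = "Bad V E t k"
  let ?h = "\<lambda>A v. if v \<in> goodset V E g A then exp (-3) else (1::real)"
  have f1: "finite ?B1" and f0: "finite ?B0" using Bad_fin[OF fV] by auto
  have Phi_nn: "Phi E g A \<ge> 0" for A unfolding Phi_def by simp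
  have "real (Suc k) * (\<Sum>A\<in>?B1. Phi E g A) = (\<Sum>A\<in>?B1. real (card A) * Phi E g A)"
    by (simp add: sum_distrib_left Bad_def)
  also have "\<dots> = (\<Sum>A\<in>?B1. \<Sum>v\<in>V. if v \<in> A then Phi E g A else 0)"
    by (rule sum.cong[OF refl]) (simp add: sum_card_const[OF fV] Bad_def)
  also have "\<dots> = (\<Sum>v\<in>V. \<Sum>A\<in>?B1. if v \<in> A then Phi E g A else 0)" by (rule sum.swap)
  also have "\<dots> \<le> (\<Sum>v\<in>V. \<Sum>A\<in>?B0. if v \<notin> A then Phi E g A * ?h A v else 0)"
  proof (rule sum_mono)
    fix v assume vV: "v \<in> V"
    let ?X = "{A\<in>?B1. v \<in> A}"
    have "(\<Sum>A\<in>?B1. if v \<in> A then Phi E g A else 0) = (\<Sum>A\<in>?X. Phi E g A)"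
      using f1 by (simp add: sum.inter_filter)
    also have "\<dots> = (\<Sum>A\<in>?X. Phi E g (insert v (A - {v})))"
      by (rule sum.cong[OF refl]) (simp add: insert_absorb)
    also have "\<dots> = (\<Sum>A\<in>(\<lambda>A. A - {v}) ` ?X. Phi E g (insert v A))"
    proof -
      have "inj_on (\<lambda>A. A - {v}) ?X"
        by (rule inj_onI) (metis (no_types, lifting) insert_Diff mem_Collect_eq)
      then show ?thesis by (simp add: sum.reindex)
    qed
    also have "\<dots> \<le> (\<Sum>A\<in>{A\<in>?B0. v \<notin> A}. Phi E g (insert v A))"
    proof (rule sum_mono2)
      show "finite {A \<in> ?B0. v \<notin> A}" using f0 by simp
      show "(\<lambda>A. A - {v}) ` ?X \<subseteq> {A \<in> ?B0. v \<notin> A}"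
      proof
        fix A' assume "A' \<in> (\<lambda>A. A - {v}) ` ?X"
        then obtain A where A: "A \<in> ?B1" "v \<in> A" "A' = A - {v}" by auto
        have fA: "finite A" using A(1) fV unfolding Bad_def by (auto intro: finite_subset)
        have "card (NS E A') \<le> card (NS E A)"
          using A(3) NS_mono[of A' A E] NS_fin[OF sg] by (auto intro: card_mono)
        then show "A' \<in> {A \<in> ?B0. v \<notin> A}" using A fA unfolding Bad_def by auto
      qed
      show "\<And>b. b \<in> {A \<in> ?B0. v \<notin> A} - (\<lambda>A. A - {v}) ` ?X \<Longrightarrow> 0 \<le> Phi E g (insert v b)"
        using Phi_nn by auto
    qed
    also have "\<dots> \<le> (\<Sum>A\<in>{A\<in>?B0. v \<notin> A}. Phi E g A * ?h A v)"
      by (rule sum_mono) (rule Phi_insert[OF sg g])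
    also have "\<dots> = (\<Sum>A\<in>?B0. if v \<notin> A then Phi E g A * ?h A v else 0)"
      using f0 by (simp add: sum.inter_filter)
    finally show "(\<Sum>A\<in>?B1. if v \<in> A then Phi E g A else 0) \<le> (\<Sum>A\<in>?B0. if v \<notin> A then Phi E g A * ?h A v else 0)" .
  qed
  also have "\<dots> = (\<Sum>A\<in>?B0. \<Sum>v\<in>V. if v \<notin> A then Phi E g A * ?h A v else 0)" by (rule sum.swap)
  also have "\<dots> \<le> (\<Sum>A\<in>?B0. Phi E g A * (real (card V - k) * (1 - (1 - exp (-3)) * q)))"
  proof (rule sum_mono)
    fix A assume A: "A \<in> ?B0"
    have AV: "A \<subseteq> V" and cA: "card A = k" using A unfolding Bad_def by auto
    have GV: "goodset V E g A \<subseteq> V - A" using good_disj[OF g, of V E A] unfolding goodset_def by auto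
    have "(\<Sum>v\<in>V. if v \<notin> A then Phi E g A * ?h A v else 0) = (\<Sum>v\<in>V - A. Phi E g A * ?h A v)"
      using fV by (simp add: sum.inter_filter[symmetric] set_diff_eq)
    also have "\<dots> = Phi E g A * (\<Sum>v\<in>V - A. ?h A v)" by (simp add: sum_distrib_left)
    also have "(\<Sum>v\<in>V - A. ?h A v) = (\<Sum>v\<in>V - A. 1 - (if v \<in> goodset V E g A then 1 - exp (-3) else 0))"
      by (rule sum.cong) auto
    also have "\<dots> = real (card (V - A)) - real (card (goodset V E g A)) * (1 - exp (-3))"
      using fV GV by (simp add: sum_subtractf sum_card_const)
    also have "\<dots> \<le> real (card V - k) * (1 - (1 - exp (-3)) * q)"
    proof -
      have "finite A" using fV AV by (rule finite_subset[rotated])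
      then have cVA: "card (V - A) = card V - k" using AV cA by (simp add: card_Diff_subset)
      have "k \<le> card V" using AV cA fV card_mono by blast
      then have "real (card V - k) \<le> real (card V)" by simp
      moreover have "q * real (card V) \<le> real (card (goodset V E g A))" using goodq[OF A] .
      moreover have "0 \<le> 1 - exp (-3::real)" by simp
      ultimately have "real (card (goodset V E g A)) * (1 - exp (-3)) \<ge> q * real (card V - k) * (1 - exp (-3))"
        by (meson mult_right_mono order_trans q mult_left_mono)
      then show ?thesis using cVA by (simp add: algebra_simps)
    qed
    finally show "(\<Sum>v\<in>V. if v \<notin> A then Phi E g A * ?h A v else 0) \<le> Phi E g A * (real (card V - k) * (1 - (1 - exp (-3)) * q))"
      using Phi_nn[of A] by (simp add: mult_left_mono)
  qed
  also have "\<dots> = real (card V - k) * (1 - (1 - exp (-3)) * q) * (\<Sum>A\<in>?B0. Phi E g A)"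
    by (simp add: sum_distrib_left sum_distrib_right mult.commute)
  finally show ?thesis .
qed


lemma choose_step: "real (Suc k) * real (n choose Suc k) = real (n - k) * real (n choose k)"
proof -
  have "Suc k * (n choose Suc k) = (n - k) * (n choose k)"
    using binomial_absorption[of k n] binomial_absorb_comp[of n k] by simp
  then show ?thesis by (metis of_nat_mult)
qed

lemma F_bound:
  assumes sg: "simple_graph V E" and g: "g > 0" and q: "q \<ge> 0" and cq: "(1 - exp (-3)) * q \<le> 1"
    and goodq: "\<And>k A. A \<in> Bad V E t k \<Longrightarrow> real (card (goodset V E g A)) \<ge> q * real (card V)"
  shows "(\<Sum>A\<in>Bad V E t k. Phi E g A) \<le> real (card V choose k) * (1 - (1 - exp (-3)) * q) ^ k"
proof (induction k)
  case 0
  have fV: "finite V" using sg simple_graph_def by auto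
  have sub: "Bad V E t 0 \<subseteq> {{}}" unfolding Bad_def using fV by (auto dest: finite_subset)
  have "(\<Sum>A\<in>Bad V E t 0. Phi E g A) \<le> (\<Sum>A\<in>{{}}. Phi E g A)"
    by (rule sum_mono2) (use sub Phi_def in auto)
  also have "\<dots> = 1" unfolding Phi_def NS_def by simp
  finally show ?case by simp
next
  case (Suc k)
  let ?r = "1 - (1 - exp (-3)) * q"
  have r0: "?r \<ge> 0" using cq by simp
  have "real (Suc k) * (\<Sum>A\<in>Bad V E t (Suc k). Phi E g A) \<le> real (card V - k) * ?r * (\<Sum>A\<in>Bad V E t k. Phi E g A)"
    by (rule step[OF sg g q goodq])
  also have "\<dots> \<le> real (card V - k) * ?r * (real (card V choose k) * ?r ^ k)"
    using Suc.IH r0 by (simp add: mult_left_mono)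
  also have "\<dots> = real (Suc k) * (real (card V choose Suc k) * ?r ^ Suc k)"
  proof -
    have "real (Suc k) * (real (card V choose Suc k) * ?r ^ Suc k) = (real (Suc k) * real (card V choose Suc k)) * (?r * ?r ^ k)"
      by (simp only: mult.assoc power_Suc)
    also have "\<dots> = real (card V - k) * real (card V choose k) * (?r * ?r ^ k)"
      by (simp only: choose_step)
    finally show ?thesis by (simp only: mult_ac)
  qed
  finally show ?case by (simp del: of_nat_Suc)
qed

lemma bad_count:
  assumes sg: "simple_graph V E" and g: "g > 0" and q: "q \<ge> 0" and cq: "(1 - exp (-3)) * q \<le> 1"
    and goodq: "\<And>k A. A \<in> Bad V E t k \<Longrightarrow> real (card (goodset V E g A)) \<ge> q * real (card V)"
  shows "real (card (Bad V E t k)) \<le> real (card V choose k) * (1 - (1 - exp (-3)) * q) ^ k * exp (3 * t / g)"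
proof -
  have fV: "finite V" using sg simple_graph_def by auto
  have "(\<Sum>A\<in>Bad V E t k. exp (- 3 * t / g)) \<le> (\<Sum>A\<in>Bad V E t k. Phi E g A)"
  proof (rule sum_mono)
    fix A assume "A \<in> Bad V E t k"
    then have "real (card (NS E A)) < t" unfolding Bad_def by auto
    then have "- 3 * t / g \<le> - 3 * real (card (NS E A)) / g" using g by (simp add: divide_right_mono)
    then show "exp (- 3 * t / g) \<le> Phi E g A" unfolding Phi_def by simp
  qed
  also have "\<dots> \<le> real (card V choose k) * (1 - (1 - exp (-3)) * q) ^ k" by (rule F_bound[OF assms])
  finally have "real (card (Bad V E t k)) * exp (- 3 * t / g) \<le> real (card V choose k) * (1 - (1 - exp (-3)) * q) ^ k"
    by simp
  then have "real (card (Bad V E t k)) * exp (- 3 * t / g) * exp (3 * t / g) \<le> real (card V choose k) * (1 - (1 - exp (-3)) * q) ^ k * exp (3 * t / g)"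
    by (simp add: mult_right_mono)
  then show ?thesis by (simp add: mult.assoc exp_add[symmetric])
qed



lemma binom_ratio0:
  assumes "k \<le> N" "N > 0"
  shows "real ((N - k) choose r) \<le> real (N choose r) * (1 - real k / real N) ^ r"
proof (induction r)
  case 0 then show ?case by simp
next
  case (Suc r)
  let ?p = "1 - real k / real N"
  have p0: "?p \<ge> 0" using assms by simp
  have "real (Suc r) * real ((N - k) choose Suc r) = real (N - k - r) * real ((N - k) choose r)"
    by (rule choose_step)
  also have "\<dots> \<le> ?p * real (N - r) * (real (N choose r) * ?p ^ r)"
  proof (cases "r \<le> N - k")
    case True
    have "real (N - k - r) \<le> ?p * real (N - r)"
    proof -
      have "real (N - k - r) = real N - real k - real r" using True assms by (simp add: of_nat_diff)
      moreover have "real (N - r) = real N - real r" using True assms by (simp add: of_nat_diff)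
      moreover have "(real N - real k - real r) * real N \<le> (real N - real k) * (real N - real r)"
        by (simp add: algebra_simps)
      ultimately show ?thesis using assms by (simp add: field_simps)
    qed
    moreover have "real ((N - k) choose r) \<le> real (N choose r) * ?p ^ r" by (rule Suc.IH)
    ultimately show ?thesis
      by (meson mult_mono of_nat_0_le_iff order_trans mult_nonneg_nonneg p0 zero_le_power)
  next
    case False
    then have "N - k - r = 0" by simp
    then show ?thesis using p0 by simp
  qed
  also have "\<dots> = ?p * (real (N - r) * real (N choose r)) * ?p ^ r" by (simp add: mult_ac)
  also have "\<dots> = ?p * (real (Suc r) * real (N choose Suc r)) * ?p ^ r" by (simp only: choose_step)
  finally have "real (Suc r) * real ((N - k) choose Suc r) \<le> real (Suc r) * (real (N choose Suc r) * ?p ^ Suc r)"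
    by (simp add: mult_ac)
  then show ?case by (simp only: mult_le_cancel_left_pos of_nat_0_less_iff zero_less_Suc)
qed

lemma binom_ratio:
  assumes "k \<le> N" "N > 0"
  shows "real ((N - k) choose r) \<le> real (N choose r) * exp (- real k * real r / real N)"
proof -
  have "(1 - real k / real N) ^ r \<le> exp (- real k / real N) ^ r"
    using assms by (intro power_mono) (auto simp: exp_ge_add_one_self[of "- real k / real N", simplified])
  also have "\<dots> = exp (- real k * real r / real N)" by (simp add: exp_of_nat_mult[symmetric] mult_ac)
  finally show ?thesis using binom_ratio0[OF assms, of r] by (meson mult_left_mono of_nat_0_le_iff order_trans)
qed


definition Ind :: "nat set \<Rightarrow> nat set set \<Rightarrow> nat \<Rightarrow> nat set set" where
  "Ind V E k = {S. independent_set V E S \<and> card S = k}"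

lemma Ind_fin: "finite V \<Longrightarrow> finite (Ind V E k)"
  unfolding Ind_def independent_set_def by (rule finite_subset[of _ "Pow V"]) auto

lemma Ind_card: assumes f: "finite V" shows "card (Ind V E k) \<le> card V choose k"
proof -
  have s: "Ind V E k \<subseteq> {B. B \<subseteq> V \<and> card B = k}" unfolding Ind_def independent_set_def by blast
  have fin: "finite {B. B \<subseteq> V \<and> card B = k}" using f by simp
  have "card (Ind V E k) \<le> card {B. B \<subseteq> V \<and> card B = k}" using card_mono[OF fin s] .
  then show ?thesis using n_subsets[OF f, of k] by simp
qed

lemma ext_count:
  assumes sg: "simple_graph V E" and A: "A \<in> Ind V E a"
  shows "card {S\<in>Ind V E m. A \<subseteq> S} \<le> (card V - a - card (NS E A)) choose (m - a)"
    and "a + card (NS E A) \<le> card V"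
proof -
  have fV: "finite V" using sg simple_graph_def by auto
  have AV: "A \<subseteq> V" and cA: "card A = a" and iA: "\<forall>e\<in>E. \<not> e \<subseteq> A"
    using A unfolding Ind_def independent_set_def by auto
  have disj: "A \<inter> NS E A = {}"
  proof (rule ccontr)
    assume "A \<inter> NS E A \<noteq> {}"
    then obtain w v where "w \<in> A" "v \<in> A" "{v,w} \<in> E" unfolding NS_def nb_def by auto
    then have "{v,w} \<subseteq> A" by simp
    then show False using iA \<open>{v,w} \<in> E\<close> by blast
  qed
  let ?W = "V - A - NS E A"
  have "card (A \<union> NS E A) = a + card (NS E A)"
  proof -
    have "finite A" using fV AV by (rule finite_subset[rotated])
    then show ?thesis using disj cA NS_fin[OF sg] by (simp add: card_Un_disjoint)
  qed
  moreover have "A \<union> NS E A \<subseteq> V" using AV NS_sub[OF sg] by auto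
  ultimately have cu: "a + card (NS E A) \<le> card V" using card_mono[OF fV \<open>A \<union> NS E A \<subseteq> V\<close>] by simp
  then show "a + card (NS E A) \<le> card V" .
  have cW: "card ?W = card V - a - card (NS E A)"
  proof -
    have "?W = V - (A \<union> NS E A)" by auto
    moreover have "card (V - (A \<union> NS E A)) = card V - card (A \<union> NS E A)"
    proof (rule card_Diff_subset)
      have "finite A" using fV AV by (rule finite_subset[rotated])
      then show "finite (A \<union> NS E A)" using NS_fin[OF sg] by simp
    qed (use \<open>A \<union> NS E A \<subseteq> V\<close> in auto)
    ultimately show ?thesis using \<open>card (A \<union> NS E A) = a + card (NS E A)\<close> by simp
  qed
  have inj: "inj_on (\<lambda>S. S - A) {S\<in>Ind V E m. A \<subseteq> S}"
  proof (rule inj_onI)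
    fix x y assume "x \<in> {S\<in>Ind V E m. A \<subseteq> S}" "y \<in> {S\<in>Ind V E m. A \<subseteq> S}" "x - A = y - A"
    then have "x = (x - A) \<union> A" "y = (y - A) \<union> A" by auto
    then show "x = y" using \<open>x - A = y - A\<close> by simp
  qed
  have img: "(\<lambda>S. S - A) ` {S\<in>Ind V E m. A \<subseteq> S} \<subseteq> {T. T \<subseteq> ?W \<and> card T = m - a}"
  proof
    fix T assume "T \<in> (\<lambda>S. S - A) ` {S\<in>Ind V E m. A \<subseteq> S}"
    then obtain S where S: "S \<in> Ind V E m" "A \<subseteq> S" "T = S - A" by auto
    have SV: "S \<subseteq> V" and cS: "card S = m" and iS: "\<forall>e\<in>E. \<not> e \<subseteq> S"
      using S(1) unfolding Ind_def independent_set_def by auto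
    have "T \<inter> NS E A = {}"
    proof (rule ccontr)
      assume "T \<inter> NS E A \<noteq> {}"
      then obtain w v where "w \<in> T" "v \<in> A" "{v,w} \<in> E" unfolding NS_def nb_def by auto
      then have "{v,w} \<subseteq> S" using S by auto
      then show False using iS \<open>{v,w} \<in> E\<close> by blast
    qed
    moreover have "card T = m - a"
    proof -
      have "finite A" using fV AV by (rule finite_subset[rotated])
      then show ?thesis using S cS cA by (simp add: card_Diff_subset)
    qed
    ultimately show "T \<in> {T. T \<subseteq> ?W \<and> card T = m - a}" using S SV by auto
  qed
  have "card {S\<in>Ind V E m. A \<subseteq> S} = card ((\<lambda>S. S - A) ` {S\<in>Ind V E m. A \<subseteq> S})"
    using inj by (simp add: card_image)
  also have "\<dots> \<le> card {T. T \<subseteq> ?W \<and> card T = m - a}"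
    using img fV by (intro card_mono) auto
  also have "\<dots> = card ?W choose (m - a)" using fV by (simp add: n_subsets)
  finally show "card {S\<in>Ind V E m. A \<subseteq> S} \<le> (card V - a - card (NS E A)) choose (m - a)" using cW by simp
qed

lemma double_count:
  assumes sg: "simple_graph V E"
  shows "card (Ind V E m) * (m choose a) = (\<Sum>A\<in>Ind V E a. card {S\<in>Ind V E m. A \<subseteq> S})"
proof -
  have fV: "finite V" using sg simple_graph_def by auto
  have "card (Ind V E m) * (m choose a) = (\<Sum>S\<in>Ind V E m. card {A. A \<subseteq> S \<and> card A = a})"
  proof -
    have "card {A. A \<subseteq> S \<and> card A = a} = m choose a" if "S \<in> Ind V E m" for S
      using that fV n_subsets[of S a] unfolding Ind_def independent_set_def by (auto dest: finite_subset)
    then show ?thesis by simp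
  qed
  also have "\<dots> = (\<Sum>S\<in>Ind V E m. \<Sum>A\<in>Ind V E a. if A \<subseteq> S then 1 else 0)"
  proof (rule sum.cong[OF refl])
    fix S assume S: "S \<in> Ind V E m"
    have "{A. A \<subseteq> S \<and> card A = a} = {A\<in>Ind V E a. A \<subseteq> S}"
      using S unfolding Ind_def independent_set_def by auto
    then show "card {A. A \<subseteq> S \<and> card A = a} = (\<Sum>A\<in>Ind V E a. if A \<subseteq> S then 1 else 0)"
      using card_filter_sum[OF Ind_fin[OF fV]] by simp
  qed
  also have "\<dots> = (\<Sum>A\<in>Ind V E a. \<Sum>S\<in>Ind V E m. if A \<subseteq> S then 1 else 0)" by (rule sum.swap)
  also have "\<dots> = (\<Sum>A\<in>Ind V E a. card {S\<in>Ind V E m. A \<subseteq> S})"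
    using card_filter_sum[OF Ind_fin[OF fV]] by simp
  finally show ?thesis .
qed



lemma count_main:
  assumes sg: "simple_graph V E" and am: "a < m" and mn: "m \<le> card V" and t: "t \<ge> 0"
  shows "real (num_indep V E m) * real (card V choose a)
         \<le> real (card V choose m) * (real (card (Bad V E t a)) + real (card V choose a) * exp (- t * real (m - a) / real (card V)))"
proof -
  have fV: "finite V" using sg simple_graph_def by auto
  let ?n = "card V"
  let ?N = "?n - a"
  let ?E2 = "exp (- t * real (m - a) / real ?n)"
  let ?P = "\<lambda>A. real (card (NS E A)) < t"
  have N0: "?N > 0" using am mn by simp
  have I_eq: "num_indep V E m = card (Ind V E m)" unfolding num_indep_def Ind_def ..
  have key: "real (card {S\<in>Ind V E m. A \<subseteq> S}) \<le> real (?N choose (m - a)) * ((if ?P A then 1 else 0) + ?E2)"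
    if A: "A \<in> Ind V E a" for A
  proof -
    let ?c = "card (NS E A)"
    have c1: "card {S\<in>Ind V E m. A \<subseteq> S} \<le> (?N - ?c) choose (m - a)"
      using ext_count(1)[OF sg A] by simp
    have c2: "?c \<le> ?N" using ext_count(2)[OF sg A] by simp
    have E0: "?E2 \<ge> 0" by simp
    show ?thesis
    proof (cases "?P A")
      case True
      have "(?N - ?c) choose (m - a) \<le> ?N choose (m - a)" by (rule binomial_right_mono) simp
      then have "real (card {S\<in>Ind V E m. A \<subseteq> S}) \<le> real (?N choose (m - a))" using c1 by linarith
      also have "\<dots> \<le> real (?N choose (m - a)) * (1 + ?E2)"
      proof -
        have "real (?N choose (m - a)) * 1 \<le> real (?N choose (m - a)) * (1 + ?E2)"
          using E0 by (intro mult_left_mono) auto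
        then show ?thesis by simp
      qed
      finally show ?thesis using True by simp
    next
      case False
      have "real (card {S\<in>Ind V E m. A \<subseteq> S}) \<le> real ((?N - ?c) choose (m - a))" using c1 by linarith
      also have "\<dots> \<le> real (?N choose (m - a)) * exp (- real ?c * real (m - a) / real ?N)"
        by (rule binom_ratio[OF c2 N0])
      also have "exp (- real ?c * real (m - a) / real ?N) \<le> ?E2"
      proof -
        have ct: "t \<le> real ?c" using False by simp
        have "t * real (m - a) / real ?n \<le> t * real (m - a) / real ?N"
          using N0 t by (intro divide_left_mono) auto
        also have "\<dots> \<le> real ?c * real (m - a) / real ?N"
          using ct N0 by (intro divide_right_mono mult_right_mono) auto
        finally show ?thesis by simp
      qed
      then have "real (?N choose (m - a)) * exp (- real ?c * real (m - a) / real ?N) \<le> real (?N choose (m - a)) * ?E2"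
        by (simp add: mult_left_mono)
      finally show ?thesis using False by simp
    qed
  qed
  have "real (card (Ind V E m) * (m choose a)) = real (\<Sum>A\<in>Ind V E a. card {S\<in>Ind V E m. A \<subseteq> S})"
    using double_count[OF sg] by simp
  also have "\<dots> = (\<Sum>A\<in>Ind V E a. real (card {S\<in>Ind V E m. A \<subseteq> S}))" by simp
  also have "\<dots> \<le> (\<Sum>A\<in>Ind V E a. real (?N choose (m - a)) * ((if ?P A then 1 else 0) + ?E2))"
    by (rule sum_mono) (rule key)
  also have "\<dots> = real (?N choose (m - a)) * (real (card {A\<in>Ind V E a. ?P A}) + real (card (Ind V E a)) * ?E2)"
  proof -
    have "real (card {A\<in>Ind V E a. ?P A}) = (\<Sum>A\<in>Ind V E a. real (if ?P A then 1 else 0))"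
      using card_filter_sum[OF Ind_fin[OF fV], of E a ?P] by simp
    also have "\<dots> = (\<Sum>A\<in>Ind V E a. (if ?P A then 1 else 0))" by (rule sum.cong) auto
    finally have h: "real (card {A\<in>Ind V E a. ?P A}) = (\<Sum>A\<in>Ind V E a. (if ?P A then 1 else 0))" .
    show ?thesis unfolding h by (simp add: sum_distrib_left[symmetric] sum.distrib distrib_left)
  qed
  also have "\<dots> \<le> real (?N choose (m - a)) * (real (card (Bad V E t a)) + real (?n choose a) * ?E2)"
  proof -
    have "{A\<in>Ind V E a. ?P A} \<subseteq> Bad V E t a" unfolding Ind_def Bad_def independent_set_def by auto
    then have "card {A\<in>Ind V E a. ?P A} \<le> card (Bad V E t a)" using Bad_fin[OF fV] by (rule card_mono[rotated])
    moreover have "card (Ind V E a) \<le> ?n choose a" by (rule Ind_card[OF fV])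
    ultimately show ?thesis
      by (intro mult_left_mono add_mono mult_right_mono) auto
  qed
  finally have main: "real (card (Ind V E m)) * real (m choose a) \<le> real (?N choose (m - a)) * (real (card (Bad V E t a)) + real (?n choose a) * ?E2)"
    by simp
  let ?Y = "real (card (Bad V E t a)) + real (?n choose a) * ?E2"
  have cm: "real (?n choose m) * real (m choose a) = real (?n choose a) * real (?N choose (m - a))"
    using choose_mult[of a m ?n] am mn by (metis less_imp_le of_nat_mult)
  have "real (card (Ind V E m)) * real (?n choose a) * real (m choose a) = real (?n choose a) * (real (card (Ind V E m)) * real (m choose a))"
    by (simp add: mult_ac)
  also have "\<dots> \<le> real (?n choose a) * (real (?N choose (m - a)) * ?Y)"
    using main by (simp add: mult_left_mono)
  also have "\<dots> = real (?n choose m) * ?Y * real (m choose a)" using cm by (simp add: mult_ac)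
  finally have "real (card (Ind V E m)) * real (?n choose a) * real (m choose a) \<le> real (?n choose m) * ?Y * real (m choose a)" .
  moreover have "real (m choose a) > 0" using am by simp
  ultimately show ?thesis unfolding I_eq by simp
qed


lemma exp3: "exp (-3::real) \<le> 1/7"
proof -
  have "exp (1::real) \<ge> 2" using exp_ge_add_one_self[of 1] by simp
  then have "exp (1::real) ^ 3 \<ge> 2 ^ 3" by (rule power_mono) simp
  then have "exp (3::real) \<ge> 8" by (simp add: exp_of_nat_mult[symmetric])
  then show ?thesis by (simp add: exp_minus field_simps)
qed

lemma combined:
  fixes V :: "nat set" and E :: "nat set set"
  assumes sg: "simple_graph V E" and md: "max_degree_le V E d" and d: "d > 0" and b: "\<beta> > 0"
    and edges: "real (card E) \<ge> 4 * \<beta> * real d * real (card V)"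
    and am: "a < m" and mn: "m \<le> card V" and t0: "0 \<le> t" and t1: "t \<le> 4 * \<beta> * real (card V)"
  shows "real (num_indep V E m) \<le> real (card V choose m) * (exp (6 * t / (\<beta> * real d) - 3 * \<beta> * real a) + exp (- t * real (m - a) / real (card V)))"
proof -
  let ?n = "card V"
  have fV: "finite V" using sg simple_graph_def by auto
  have n0: "real ?n > 0" using am mn by simp
  have "real (2 * card E) = real (\<Sum>v\<in>V. degree E v)" using handshake[OF sg] by simp
  also have "\<dots> \<le> real (\<Sum>v\<in>V. d)" using md unfolding max_degree_le_def
    by (intro of_nat_mono sum_mono) auto
  finally have "2 * real (card E) \<le> real d * real ?n" by (simp add: mult.commute)
  with edges have "8 * \<beta> * real d * real ?n \<le> 1 * real d * real ?n" by simp
  then have b8: "8 * \<beta> \<le> 1" using d n0 by (simp add: mult_le_cancel_right_pos mult_le_cancel_left_pos)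
  define g where "g = \<beta> * real d / 2"
  define q where "q = 7 * \<beta> / 2"
  have g0: "g > 0" using b d unfolding g_def by simp
  have q0: "q \<ge> 0" using b q_def by simp
  have e3: "exp (-3::real) \<le> 1/7" by (rule exp3)
  have cq: "(1 - exp (-3)) * q \<le> 1"
  proof -
    have "(1 - exp (-3)) * q \<le> 1 * q" using q0 by (intro mult_right_mono) auto
    also have "\<dots> \<le> 1" using b8 unfolding q_def by simp
    finally show ?thesis .
  qed
  have goodq: "real (card (goodset V E g A)) \<ge> q * real ?n" if A: "A \<in> Bad V E t k" for k A
  proof -
    have B: "NS E A \<subseteq> V" by (rule NS_sub[OF sg])
    have cB: "real (card (NS E A)) < t" using A unfolding Bad_def by auto
    have gc: "real d * real (card (goodset V E g A)) + g * real ?n \<ge> 2 * real (card E) - real d * real (card (NS E A))"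
      using good_count[OF sg md B, of g] g0 unfolding goodset_def by simp
    have "real d * real (card (NS E A)) \<le> real d * t" using cB by (simp add: mult_left_mono)
    also have "\<dots> \<le> real d * (4 * \<beta> * real ?n)" using t1 by (simp add: mult_left_mono)
    finally have "real d * real (card (goodset V E g A)) \<ge> real d * (q * real ?n)"
      using gc edges unfolding g_def q_def by (simp add: algebra_simps)
    then show ?thesis using d by simp
  qed
  have bc: "real (card (Bad V E t a)) \<le> real (?n choose a) * (1 - (1 - exp (-3)) * q) ^ a * exp (3 * t / g)"
    by (rule bad_count[OF sg g0 q0 cq goodq])
  have r1: "1 - (1 - exp (-3)) * q \<le> exp (- 3 * \<beta>)"
  proof -
    have "1 - (1 - exp (-3)) * q \<le> 1 + (- 3 * \<beta>)" using e3 b unfolding q_def by (simp add: algebra_simps)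
    also have "\<dots> \<le> exp (- 3 * \<beta>)" by (rule exp_ge_add_one_self)
    finally show ?thesis .
  qed
  have r0: "0 \<le> 1 - (1 - exp (-3)) * q" using cq by simp
  have "(1 - (1 - exp (-3)) * q) ^ a \<le> exp (- 3 * \<beta>) ^ a" using r1 r0 by (rule power_mono)
  also have "\<dots> = exp (- 3 * \<beta> * real a)" by (simp add: exp_of_nat_mult[symmetric] mult_ac)
  finally have ra: "(1 - (1 - exp (-3)) * q) ^ a \<le> exp (- 3 * \<beta> * real a)" .
  have "3 * t / g = 6 * t / (\<beta> * real d)" unfolding g_def by (simp add: field_simps)
  then have bc2: "real (card (Bad V E t a)) \<le> real (?n choose a) * exp (6 * t / (\<beta> * real d) - 3 * \<beta> * real a)"
  proof -
    have "real (?n choose a) * (1 - (1 - exp (-3)) * q) ^ a * exp (3 * t / g) \<le> real (?n choose a) * exp (- 3 * \<beta> * real a) * exp (3 * t / g)"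
      using ra by (intro mult_right_mono mult_left_mono) auto
    also have "\<dots> = real (?n choose a) * exp (6 * t / (\<beta> * real d) - 3 * \<beta> * real a)"
      using \<open>3 * t / g = 6 * t / (\<beta> * real d)\<close> by (simp add: mult.assoc exp_add[symmetric])
    finally show ?thesis using bc by linarith
  qed
  let ?X = "exp (6 * t / (\<beta> * real d) - 3 * \<beta> * real a)"
  let ?E2 = "exp (- t * real (m - a) / real ?n)"
  have "real (num_indep V E m) * real (?n choose a) \<le> real (?n choose m) * (real (card (Bad V E t a)) + real (?n choose a) * ?E2)"
    by (rule count_main[OF sg am mn t0])
  also have "\<dots> \<le> real (?n choose m) * (real (?n choose a) * ?X + real (?n choose a) * ?E2)"
    using bc2 by (intro mult_left_mono add_mono) auto
  also have "\<dots> = real (?n choose m) * (?X + ?E2) * real (?n choose a)" by (simp add: algebra_simps)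
  finally have "real (num_indep V E m) * real (?n choose a) \<le> real (?n choose m) * (?X + ?E2) * real (?n choose a)" .
  moreover have "real (?n choose a) > 0" using am mn by simp
  ultimately show ?thesis by simp
qed



lemma div2_facts: "real (m div 2) \<ge> (real m - 1) / 2" "real (m - m div 2) \<ge> real m / 2" "m div 2 \<le> m"
proof -
  have "m = 2 * (m div 2) + m mod 2" by simp
  moreover have "m mod 2 \<le> 1" by simp
  ultimately have h: "real m = 2 * real (m div 2) + real (m mod 2)" "real (m mod 2) \<le> 1"
    by (metis of_nat_add of_nat_mult of_nat_numeral, simp)
  show "real (m div 2) \<ge> (real m - 1) / 2" using h by simp
  have "m div 2 \<le> m" by simp
  then have "real (m - m div 2) = real m - real (m div 2)" by (simp add: of_nat_diff)
  then show "real (m - m div 2) \<ge> real m / 2" using h by simp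
  show "m div 2 \<le> m" by simp
qed

lemma exp_half: "x \<le> y - ln 2 \<Longrightarrow> exp x \<le> exp y / (2::real)"
proof -
  assume "x \<le> y - ln 2"
  then have "exp x \<le> exp (y - ln 2)" by simp
  also have "\<dots> = exp y / 2" by (simp add: exp_diff)
  finally show ?thesis .
qed

lemma regime_large:
  fixes V :: "nat set" and E :: "nat set set"
  assumes sg: "simple_graph V E" and md: "max_degree_le V E d" and d: "d \<ge> 1" and b: "\<beta> > 0"
    and edges: "real (card E) \<ge> 4 * \<beta> * real d * real (card V)"
    and mn: "m \<le> card V" and mbig: "real m \<ge> 6 + 4 / \<beta>"
    and reg: "real d * real m \<ge> 96 / \<beta> * real (card V)"
  shows "real (num_indep V E m) \<le> real (card V choose m) * exp (- \<beta> * real m)"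
proof -
  let ?n = "card V" and ?a = "m div 2"
  have m1: "real m \<ge> 6" using mbig b by (smt (verit) divide_pos_pos)
  have am: "?a < m" using m1 by simp
  have t0: "0 \<le> 4 * \<beta> * real ?n" using b by simp
  have n0: "real ?n > 0" using am mn by simp
  have d0: "real d > 0" using d by simp
  have I: "real (num_indep V E m) \<le> real (?n choose m) * (exp (6 * (4 * \<beta> * real ?n) / (\<beta> * real d) - 3 * \<beta> * real ?a)
        + exp (- (4 * \<beta> * real ?n) * real (m - ?a) / real ?n))"
    using combined[OF sg md _ b edges am mn t0] d by simp
  have l2: "ln 2 \<le> (1::real)" using ln_2_less_1 by simp
  have e1: "6 * (4 * \<beta> * real ?n) / (\<beta> * real d) \<le> \<beta> * real m / 4"
  proof -
    have "real ?n \<le> \<beta> * (real d * real m) / 96" using reg b by (simp add: field_simps)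
    then have "24 * real ?n \<le> \<beta> * real m / 4 * real d" by (simp add: field_simps)
    then show ?thesis using b d0 by (simp add: field_simps)
  qed
  have a1: "real ?a \<ge> (real m - 1) / 2" and a2: "real (m - ?a) \<ge> real m / 2" using div2_facts by auto
  have "6 * (4 * \<beta> * real ?n) / (\<beta> * real d) - 3 * \<beta> * real ?a \<le> \<beta> * real m / 4 - 3 * \<beta> * ((real m - 1) / 2)"
    using e1 a1 b by (smt (verit) mult_left_mono)
  also have "\<dots> \<le> - \<beta> * real m - ln 2"
  proof -
    have "\<beta> * real m \<ge> 6 * \<beta> + 4" using mbig b by (simp add: field_simps)
    then show ?thesis using l2 by (simp add: algebra_simps)
  qed
  finally have x1: "exp (6 * (4 * \<beta> * real ?n) / (\<beta> * real d) - 3 * \<beta> * real ?a) \<le> exp (- \<beta> * real m) / 2"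
    by (rule exp_half)
  have "- (4 * \<beta> * real ?n) * real (m - ?a) / real ?n = - 4 * \<beta> * real (m - ?a)" using n0 by simp
  also have "\<dots> \<le> - 2 * \<beta> * real m" using a2 b by simp
  also have "\<dots> \<le> - \<beta> * real m - ln 2"
  proof -
    have "\<beta> * real m \<ge> 4" using mbig b by (simp add: field_simps)
    then show ?thesis using l2 by simp
  qed
  finally have x2: "exp (- (4 * \<beta> * real ?n) * real (m - ?a) / real ?n) \<le> exp (- \<beta> * real m) / 2"
    by (rule exp_half)
  have "exp (6 * (4 * \<beta> * real ?n) / (\<beta> * real d) - 3 * \<beta> * real ?a)
        + exp (- (4 * \<beta> * real ?n) * real (m - ?a) / real ?n) \<le> exp (- \<beta> * real m)"
    using x1 x2 by linarith
  then have "real (?n choose m) * (exp (6 * (4 * \<beta> * real ?n) / (\<beta> * real d) - 3 * \<beta> * real ?a)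
        + exp (- (4 * \<beta> * real ?n) * real (m - ?a) / real ?n)) \<le> real (?n choose m) * exp (- \<beta> * real m)"
    by (rule mult_left_mono) simp
  then show ?thesis using I by linarith
qed


lemma regime_small:
  fixes V :: "nat set" and E :: "nat set set"
  assumes sg: "simple_graph V E" and md: "max_degree_le V E d" and d: "d \<ge> 1" and b: "\<beta> > 0"
    and edges: "real (card E) \<ge> 4 * \<beta> * real d * real (card V)"
    and mn: "m \<le> card V" and n2: "card V \<ge> 2" and C1: "C \<ge> 384 / \<beta>^2" and Cge1: "C \<ge> 1"
    and mbig: "real m \<ge> 2 + 1 / \<beta>"
    and msq: "(real m)^2 \<ge> C^2 * (real (card V) * ln (real (card V)))"
    and reg: "real d * real m < 96 / \<beta> * real (card V)"
  shows "real (num_indep V E m) \<le> real (card V choose m) * (real (card V) powr (- C * real d))"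
proof -
  let ?n = "card V" and ?a = "m div 2"
  define c where "c = \<beta>^2 / 24"
  define t where "t = c * real d * real ?a"
  define Lk where "Lk = C * real d * ln (real ?n)"
  have m2: "real m \<ge> 2" using mbig b by (smt (verit) divide_pos_pos)
  have am: "?a < m" using m2 by simp
  have n0: "real ?n > 0" using n2 by simp
  have d0: "real d > 0" using d by simp
  have c0: "c > 0" using b unfolding c_def by simp
  have a1: "real ?a \<ge> (real m - 1) / 2" and a2: "real (m - ?a) \<ge> real m / 2" and a3: "?a \<le> m"
    using div2_facts by auto
  have t0: "0 \<le> t" unfolding t_def using c0 by simp
  have t1: "t \<le> 4 * \<beta> * real ?n"
  proof -
    have "t \<le> c * (real d * real m)" unfolding t_def using c0 d0 a3 by (simp add: mult_left_mono)
    also have "\<dots> \<le> c * (96 / \<beta> * real ?n)" using reg c0 by (intro mult_left_mono) auto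
    also have "\<dots> = 4 * \<beta> * real ?n" unfolding c_def using b by (simp add: field_simps power2_eq_square)
    finally show ?thesis .
  qed
  have I: "real (num_indep V E m) \<le> real (?n choose m) * (exp (6 * t / (\<beta> * real d) - 3 * \<beta> * real ?a)
        + exp (- t * real (m - ?a) / real ?n))"
    using combined[OF sg md _ b edges am mn t0 t1] d by simp
  have l2: "ln 2 \<le> (1::real)" using ln_2_less_1 by simp
  have lnn: "ln (real ?n) \<ge> ln 2" using n2 by simp
  have ln2p: "ln (2::real) > 0" by simp
  have C0: "C > 0" using Cge1 by simp
  have Lk_ge: "Lk \<ge> ln 2"
  proof -
    have "ln (real ?n) \<ge> 0" using lnn ln2p by linarith
    then have "1 * 1 * ln (real ?n) \<le> C * real d * ln (real ?n)"
      using Cge1 d by (intro mult_right_mono mult_mono) auto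
    then show ?thesis unfolding Lk_def using lnn by simp
  qed
  have key1: "Lk \<le> \<beta> * real m / 4"
  proof -
    have "C * (C * (real ?n * ln (real ?n))) \<le> (real m)^2" using msq by (simp add: power2_eq_square mult_ac)
    then have "real d * (C * (C * (real ?n * ln (real ?n)))) \<le> real d * (real m)^2" using d0 by simp
    also have "\<dots> = (real d * real m) * real m" by (simp add: power2_eq_square)
    also have "\<dots> \<le> (96 / \<beta> * real ?n) * real m" using reg by (intro mult_right_mono) auto
    finally have "(C * Lk) * real ?n \<le> (96 / \<beta> * real m) * real ?n" unfolding Lk_def by (simp add: mult_ac)
    then have h: "C * Lk \<le> 96 / \<beta> * real m" using n0 by (rule mult_right_le_imp_le)
    have "96 / \<beta> * real m \<le> C * (\<beta> * real m / 4)"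
    proof -
      have "384 / \<beta>^2 * (\<beta> * real m / 4) \<le> C * (\<beta> * real m / 4)" using C1 b by (intro mult_right_mono) auto
      moreover have "384 / \<beta>^2 * (\<beta> * real m / 4) = 96 / \<beta> * real m" using b by (simp add: field_simps power2_eq_square)
      ultimately show ?thesis by simp
    qed
    with h have "C * Lk \<le> C * (\<beta> * real m / 4)" by simp
    then show ?thesis using C0 by simp
  qed
  have "6 * t / (\<beta> * real d) - 3 * \<beta> * real ?a = - (11/4) * \<beta> * real ?a"
    unfolding t_def c_def using b d0 by (simp add: field_simps power2_eq_square)
  also have "\<dots> \<le> - (11/8) * \<beta> * (real m - 1)" using a1 b by simp
  also have "\<dots> \<le> - Lk - ln 2"
  proof -
    have X: "\<beta> * real m \<ge> 2 * \<beta> + 1" using mbig b by (simp add: field_simps)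
    have "- (11/8) * \<beta> * (real m - 1) = - (11/8) * (\<beta> * real m) + (11/8) * \<beta>" by (simp add: field_simps)
    then show ?thesis using X key1 l2 b by linarith
  qed
  finally have x1: "exp (6 * t / (\<beta> * real d) - 3 * \<beta> * real ?a) \<le> exp (- Lk) / 2"
    by (rule exp_half)
  have key2: "t * real (m - ?a) / real ?n \<ge> 2 * Lk"
  proof -
    have "real ?a * real (m - ?a) \<ge> (real m / 4) * (real m / 2)"
    proof (rule mult_mono)
      show "real m / 4 \<le> real ?a" using a1 m2 by simp
    qed (use a2 m2 in auto)
    then have am2: "real ?a * real (m - ?a) \<ge> (real m)^2 / 8" by (simp add: power2_eq_square)
    have e1: "t * real (m - ?a) = c * real d * (real ?a * real (m - ?a))" unfolding t_def by (simp add: mult_ac)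
    have e2: "c * real d * ((real m)^2 / 8) \<le> c * real d * (real ?a * real (m - ?a))"
      using am2 c0 d0 by (intro mult_left_mono) auto
    have e3: "c * real d * (C^2 * (real ?n * ln (real ?n)) / 8) \<le> c * real d * ((real m)^2 / 8)"
      using msq c0 d0 by (intro mult_left_mono) auto
    have "t * real (m - ?a) \<ge> c * real d * (C^2 * (real ?n * ln (real ?n)) / 8)"
      using e1 e2 e3 by linarith
    then have "t * real (m - ?a) / real ?n \<ge> c * real d * (C^2 * (real ?n * ln (real ?n)) / 8) / real ?n"
      by (rule divide_right_mono) (use n0 in simp)
    also have "c * real d * (C^2 * (real ?n * ln (real ?n)) / 8) / real ?n = (c * C / 8) * Lk"
      unfolding Lk_def using n0 by (simp add: field_simps power2_eq_square)
    finally have h: "t * real (m - ?a) / real ?n \<ge> (c * C / 8) * Lk" .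
    have "c * C / 8 \<ge> 2"
    proof -
      have "c * C \<ge> c * (384 / \<beta>^2)" using C1 c0 by (intro mult_left_mono) auto
      moreover have "c * (384 / \<beta>^2) = 16" unfolding c_def using b by (simp add: field_simps)
      ultimately show ?thesis by simp
    qed
    moreover have "Lk \<ge> 0" using Lk_ge ln2p by linarith
    ultimately have "(c * C / 8) * Lk \<ge> 2 * Lk" by (simp add: mult_right_mono)
    with h show ?thesis by linarith
  qed
  have "- t * real (m - ?a) / real ?n \<le> - Lk - ln 2" using key2 Lk_ge by simp
  then have x2: "exp (- t * real (m - ?a) / real ?n) \<le> exp (- Lk) / 2" by (rule exp_half)
  have P: "real ?n powr (- C * real d) = exp (- Lk)" unfolding Lk_def powr_def using n0 by simp
  have "exp (6 * t / (\<beta> * real d) - 3 * \<beta> * real ?a) + exp (- t * real (m - ?a) / real ?n) \<le> exp (- Lk)"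
    using x1 x2 by linarith
  then have "real (?n choose m) * (exp (6 * t / (\<beta> * real d) - 3 * \<beta> * real ?a) + exp (- t * real (m - ?a) / real ?n))
      \<le> real (?n choose m) * exp (- Lk)" by (rule mult_left_mono) simp
  then show ?thesis using I P by simp
qed



lemma ln2_half: "ln (2::real) \<ge> 1/2"
proof -
  have "exp (-1/2::real) \<ge> 1/2" using exp_ge_add_one_self[of "-1/2::real"] by simp
  moreover have "exp (1/2::real) * exp (-1/2) = 1" by (simp add: exp_add[symmetric])
  moreover have "exp (1/2::real) > 0" by simp
  ultimately have "exp (1/2::real) * (1/2) \<le> 1" by (metis mult_left_mono less_imp_le)
  then have "exp (1/2::real) \<le> 2" by simp
  then have "ln (exp (1/2::real)) \<le> ln 2" by (subst ln_le_cancel_iff) auto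
  then show ?thesis by simp
qed

theorem lemma5p5:
  fixes \<beta> :: real
  assumes "\<beta> > 0"
  shows "\<exists>C0 > 0. \<forall>(V :: nat set) (E :: nat set set) (n :: nat) (d :: nat).
           simple_graph V E \<longrightarrow> card V = n \<longrightarrow> max_degree_le V E d \<longrightarrow>
           real (num_edges E) \<ge> 4 * \<beta> * real d * real n \<longrightarrow>
           (\<forall>C :: real. C \<ge> C0 \<longrightarrow> (\<forall>m :: nat. real m \<ge> C * sqrt (real n * ln (real n)) \<longrightarrow>
              real (num_indep V E m) \<le>
                (real n powr (- C * real d) + exp (- \<beta> * real m)) * real (n choose m)))"
proof -
  have b: "\<beta> > 0" by (rule assms)
  define C0 where "C0 = 384 / \<beta>^2 + 4 / \<beta> + 6"
  have C0pos: "C0 > 0" unfolding C0_def using b by (simp add: add_pos_pos)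
  show ?thesis
  proof (rule exI[of _ C0], intro conjI allI impI)
    show "C0 > 0" by (rule C0pos)
  next
    fix V :: "nat set" and E :: "nat set set" and n d :: nat and C :: real and m :: nat
    assume sg: "simple_graph V E" and cV: "card V = n" and md: "max_degree_le V E d"
      and edges0: "real (num_edges E) \<ge> 4 * \<beta> * real d * real n"
      and CC: "C \<ge> C0" and mb: "real m \<ge> C * sqrt (real n * ln (real n))"
    have edges: "real (card E) \<ge> 4 * \<beta> * real d * real (card V)" using edges0 cV by (simp add: num_edges_def)
    have fV: "finite V" using sg simple_graph_def by auto
    have RHS0: "0 \<le> (real n powr (- C * real d) + exp (- \<beta> * real m)) * real (n choose m)" by simp
    show "real (num_indep V E m) \<le> (real n powr (- C * real d) + exp (- \<beta> * real m)) * real (n choose m)"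
    proof (cases "m \<le> n")
      case False
      have "{S. independent_set V E S \<and> card S = m} = {}"
      proof -
        have "card S \<le> n" if "S \<subseteq> V" for S using card_mono[OF fV that] cV by simp
        then show ?thesis using False unfolding independent_set_def by auto
      qed
      then have "num_indep V E m = 0" unfolding num_indep_def by (simp only: card.empty)
      then show ?thesis using RHS0 by simp
    next
      case mn: True
      show ?thesis
      proof (cases "E = {}")
        case True
        have "{S. independent_set V E S \<and> card S = m} = {S. S \<subseteq> V \<and> card S = m}"
          using True unfolding independent_set_def by auto
        then have I: "num_indep V E m = n choose m" unfolding num_indep_def using n_subsets[OF fV] cV by simp
        show ?thesis
        proof (cases "n = 0")
          case True
          then have "m = 0" using mn by simp
          then show ?thesis using I True by simp
        next
          case n0: False
          show ?thesis
          proof (cases "d = 0")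
            case True
            then have "real n powr (- C * real d) = 1" using n0 by simp
            moreover have "exp (- \<beta> * real m) \<ge> 0" by simp
            ultimately have "1 * real (n choose m) \<le> (real n powr (- C * real d) + exp (- \<beta> * real m)) * real (n choose m)"
              by (intro mult_right_mono) auto
            then show ?thesis using I by simp
          next
            case False
            have "4 * \<beta> * real d * real n > 0" using False n0 b by simp
            moreover have "card E = 0" using True by simp
            ultimately show ?thesis using edges cV by simp
          qed
        qed
      next
        case False
        then obtain e where eE: "e \<in> E" by auto
        have eV: "e \<subseteq> V" and ce: "card e = 2" using sg eE unfolding simple_graph_def by auto
        have n2: "n \<ge> 2" using card_mono[OF fV eV] ce cV by simp
        obtain v where ve: "v \<in> e" using ce by (auto simp: card_2_iff)
        have vV: "v \<in> V" using ve eV by auto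
        have "finite E" by (rule sg_finE[OF sg])
        moreover have "{e\<in>E. v \<in> e} \<noteq> {}" using eE ve by auto
        ultimately have "card {e\<in>E. v \<in> e} > 0" by (simp add: card_gt_0_iff)
        then have "card {e\<in>E. v \<in> e} \<ge> 1" by simp
        then have d1: "d \<ge> 1" using md vV unfolding max_degree_le_def degree_def by (meson order_trans)
        have "ln (real n) \<ge> ln 2" using n2 by simp
        then have lnn: "ln (real n) \<ge> 1/2" using ln2_half by linarith
        have nl1: "real n * ln (real n) \<ge> 1"
        proof -
          have "real n * ln (real n) \<ge> 2 * (1/2)" using n2 lnn by (intro mult_mono) auto
          then show ?thesis by simp
        qed
        have C0': "C \<ge> 384 / \<beta>^2 + 4 / \<beta> + 6" using CC C0_def by simp
        have Cpos: "C > 0" using CC C0pos by simp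
        have sq1: "sqrt (real n * ln (real n)) \<ge> 1" using nl1 by simp
        have mC: "real m \<ge> C"
        proof -
          have "C * 1 \<le> C * sqrt (real n * ln (real n))" using sq1 Cpos by (intro mult_left_mono) auto
          then show ?thesis using mb by simp
        qed
        have msq: "(real m)^2 \<ge> C^2 * (real n * ln (real n))"
        proof -
          have "0 \<le> C * sqrt (real n * ln (real n))" using Cpos sq1 by simp
          then have "(C * sqrt (real n * ln (real n)))^2 \<le> (real m)^2" using mb by (rule power_mono[rotated])
          moreover have "(C * sqrt (real n * ln (real n)))^2 = C^2 * (real n * ln (real n))"
            using nl1 by (simp add: power_mult_distrib)
          ultimately show ?thesis by simp
        qed
        have b2: "384 / \<beta>^2 > 0" "4 / \<beta> > 0" using b by auto
        show ?thesis
        proof (cases "real d * real m \<ge> 96 / \<beta> * real (card V)")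
          case True
          have mbig: "real m \<ge> 6 + 4 / \<beta>" using mC C0' b2 by linarith
          have "real (num_indep V E m) \<le> real (card V choose m) * exp (- \<beta> * real m)"
            by (rule regime_large[OF sg md d1 b edges _ mbig True]) (use mn cV in simp)
          moreover have "real (card V choose m) * exp (- \<beta> * real m) \<le> (real n powr (- C * real d) + exp (- \<beta> * real m)) * real (n choose m)"
            using cV by (simp add: distrib_right)
          ultimately show ?thesis by linarith
        next
          case False
          have reg: "real d * real m < 96 / \<beta> * real (card V)" using False by simp
          have "1 / \<beta> \<le> 4 / \<beta>" using b by (simp add: divide_right_mono)
          then have mbig: "real m \<ge> 2 + 1 / \<beta>" using mC C0' b2 by linarith
          have C1: "C \<ge> 384 / \<beta>^2" using C0' b2 by linarith
          have Cge1: "C \<ge> 1" using C0' b2 by linarith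
          have "real (num_indep V E m) \<le> real (card V choose m) * (real (card V) powr (- C * real d))"
            by (rule regime_small[OF sg md d1 b edges _ _ C1 Cge1 mbig _ reg]) (use mn cV n2 msq in simp_all)
          moreover have "real (card V choose m) * (real (card V) powr (- C * real d)) \<le> (real n powr (- C * real d) + exp (- \<beta> * real m)) * real (n choose m)"
            using cV by (simp add: distrib_right)
          ultimately show ?thesis by linarith
        qed
      qed
    qed
  qed
qed


end
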